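(* Every $A'$-group is a solvable $A$-group, i.e. a solvable finite group all of whose Sylow subgroups are abelian.
   Context: $A'$-groups are defined inductively: (1) finite abelian groups are $A'$-groups; (2) if $\mathcal G$ is an $A'$-group and $H$ is a finite abelian group of order prime to $|\mathcal G|$, then $H\rtimes_\mu\mathcal G$ is an $A'$-group for every action $\mu$ of $\mathcal G$ on $H$; (3) if $\mathcal G_1$ and $\mathcal G_2$ are $A'$-groups, then $\mathcal G_1\times\mathcal G_2$ is an $A'$-group. *)

theory Defs
  imports "HOL-Algebra.Algebra" "HOL-Computational_Algebra.Primes"
begin

definition semidirect_product ::
  "('a, 'c) monoid_scheme \<Rightarrow> ('b \<Rightarrow> 'a \<Rightarrow> 'a) \<Rightarrow> ('b, 'd) monoid_scheme \<Rightarrow> ('a \<times> 'b) monoid"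
  where "semidirect_product H mu K =
    \<lparr> carrier = carrier H \<times> carrier K,
      monoid.mult = (\<lambda>x y. (fst x \<otimes>\<^bsub>H\<^esub> mu (snd x) (fst y), snd x \<otimes>\<^bsub>K\<^esub> snd y)),
      monoid.one = (\<one>\<^bsub>H\<^esub>, \<one>\<^bsub>K\<^esub>) \<rparr>"

text \<open>Every finite group is
  isomorphic to one with carrier a subset of nat, so we generate the class on
  nat-carried groups and close it under isomorphism; A'-groups of arbitrary
  carrier type are then those isomorphic to a member.\<close>
inductive Aprime_nat :: "nat monoid \<Rightarrow> bool" where
  abelian: "\<lbrakk> comm_group G; finite (carrier G) \<rbrakk> \<Longrightarrow> Aprime_nat G"
| semidirect: "\<lbrakk> Aprime_nat K; comm_group (H :: nat monoid); finite (carrier H);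
     coprime (order H) (order K); mu \<in> hom K (AutoGroup H);
     S \<cong> semidirect_product H mu K \<rbrakk> \<Longrightarrow> Aprime_nat S"
| product: "\<lbrakk> Aprime_nat G1; Aprime_nat G2; S \<cong> G1 \<times>\<times> G2 \<rbrakk> \<Longrightarrow> Aprime_nat S"

definition Aprime_group :: "('a, 'b) monoid_scheme \<Rightarrow> bool" where
  "Aprime_group G \<longleftrightarrow> group G \<and> (\<exists>S. Aprime_nat S \<and> G \<cong> S)"

definition sylow_subgroup :: "('a, 'b) monoid_scheme \<Rightarrow> nat \<Rightarrow> 'a set \<Rightarrow> bool" where
  "sylow_subgroup G p P \<longleftrightarrow> Factorial_Ring.prime p \<and> subgroup P G \<and>
     card P = p ^ multiplicity p (order G)"

definition A_group :: "('a, 'b) monoid_scheme \<Rightarrow> bool" where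
  "A_group G \<longleftrightarrow> group G \<and> finite (carrier G) \<and>
     (\<forall>p P. sylow_subgroup G p P \<longrightarrow> comm_group (G\<lparr>carrier := P\<rparr>))"

end

theory Submission
  imports Defs
begin

definition Qp :: "('a, 'b) monoid_scheme \<Rightarrow> bool" where
  "Qp G \<longleftrightarrow> (\<forall>P p k. Factorial_Ring.prime (p::nat) \<longrightarrow> subgroup P G \<longrightarrow> card P = p ^ k
      \<longrightarrow> comm_group (G\<lparr>carrier := P\<rparr>))"

definition Inv :: "('a, 'b) monoid_scheme \<Rightarrow> bool" where
  "Inv S \<longleftrightarrow> finite (carrier S) \<and> (\<forall>e. group (S\<lparr>one := e\<rparr>) \<longrightarrow>
      solvable (S\<lparr>one := e\<rparr>) \<and> Qp (S\<lparr>one := e\<rparr>))"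

lemma sub_comm:
  assumes "group G" "subgroup P G" "\<And>x y. x \<in> P \<Longrightarrow> y \<in> P \<Longrightarrow> x \<otimes>\<^bsub>G\<^esub> y = y \<otimes>\<^bsub>G\<^esub> x"
  shows "comm_group (G\<lparr>carrier := P\<rparr>)"
proof -
  have "group (G\<lparr>carrier := P\<rparr>)" using group.subgroup_imp_group assms by blast
  then show ?thesis by (rule group.group_comm_groupI) (use assms in auto)
qed

lemma pullback_comm:
  assumes "group A" "group B" "h \<in> hom A B" "subgroup P A" "inj_on h P"
    "comm_group (B\<lparr>carrier := h ` P\<rparr>)"
  shows "comm_group (A\<lparr>carrier := P\<rparr>)"
proof (rule sub_comm[OF assms(1,4)])
  fix x y assume xy: "x \<in> P" "y \<in> P"
  have c: "x \<in> carrier A" "y \<in> carrier A" using xy subgroup.subset[OF assms(4)] by auto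
  have "h (x \<otimes>\<^bsub>A\<^esub> y) = h x \<otimes>\<^bsub>B\<^esub> h y" using assms(3) c by (simp add: hom_mult)
  also have "\<dots> = h y \<otimes>\<^bsub>B\<^esub> h x"
    using comm_groupE(4)[OF assms(6)] xy by auto
  also have "\<dots> = h (y \<otimes>\<^bsub>A\<^esub> x)" using assms(3) c by (simp add: hom_mult)
  finally show "x \<otimes>\<^bsub>A\<^esub> y = y \<otimes>\<^bsub>A\<^esub> x"
    using assms(5) xy subgroup.m_closed[OF assms(4)] by (auto dest: inj_onD)
qed

lemma img_card_dvd:
  assumes "group_hom G H h" "subgroup I G" "finite I"
  shows "card (h ` I) dvd card I"
proof -
  interpret gh: group_hom "G\<lparr>carrier := I\<rparr>" "H\<lparr>carrier := h ` I\<rparr>" h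
    using group_hom.induced_group_hom[OF assms(1,2)] .
  have "(G\<lparr>carrier := I\<rparr> Mod kernel (G\<lparr>carrier := I\<rparr>) (H\<lparr>carrier := h ` I\<rparr>) h) \<cong> H\<lparr>carrier := h ` I\<rparr>"
    by (rule gh.FactGroup_iso) simp
  then have "card (rcosets\<^bsub>G\<lparr>carrier := I\<rparr>\<^esub> kernel (G\<lparr>carrier := I\<rparr>) (H\<lparr>carrier := h ` I\<rparr>) h) = card (h ` I)"
    using iso_same_card by (fastforce simp: FactGroup_def)
  moreover have "card (rcosets\<^bsub>G\<lparr>carrier := I\<rparr>\<^esub> kernel (G\<lparr>carrier := I\<rparr>) (H\<lparr>carrier := h ` I\<rparr>) h)
      * card (kernel (G\<lparr>carrier := I\<rparr>) (H\<lparr>carrier := h ` I\<rparr>) h) = card I"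
    using gh.G.lagrange[OF gh.subgroup_kernel] by (simp add: order_def)
  ultimately show ?thesis by (metis dvd_triv_left)
qed

lemma sub_card_dvd:
  assumes "group G" "subgroup A G" "subgroup B G" "A \<subseteq> B" "finite B"
  shows "card A dvd card B"
proof -
  have "subgroup A (G\<lparr>carrier := B\<rparr>)" using group.subgroup_incl assms by blast
  moreover have "group (G\<lparr>carrier := B\<rparr>)" using group.subgroup_imp_group assms by blast
  ultimately have "card (rcosets\<^bsub>G\<lparr>carrier := B\<rparr>\<^esub> A) * card A = card B"
    using group.lagrange by (fastforce simp: order_def)
  then show ?thesis by (metis dvd_triv_right)
qed

lemma qp_pullback:
  assumes "group A" "group B" "h \<in> hom A B" "inj_on h (carrier A)" "Qp B"
  shows "Qp A"
  unfolding Qp_def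
proof (intro allI impI)
  fix P and p :: nat and k assume pr: "Factorial_Ring.prime p" and sP: "subgroup P A" and cP: "card P = p ^ k"
  have gh: "group_hom A B h" using assms by (simp add: group_hom_def group_hom_axioms_def)
  have inj: "inj_on h P" using assms(4) subgroup.subset[OF sP] inj_on_subset by blast
  have "subgroup (h ` P) B" using group_hom.subgroup_img_is_subgroup[OF gh sP] .
  moreover have "card (h ` P) = p ^ k" using card_image[OF inj] cP by simp
  ultimately have "comm_group (B\<lparr>carrier := h ` P\<rparr>)" using assms(5) pr unfolding Qp_def by blast
  then show "comm_group (A\<lparr>carrier := P\<rparr>)" using pullback_comm assms sP inj by blast
qed

lemma iso_one_upd: "\<phi> \<in> iso A B \<Longrightarrow> \<phi> \<in> iso (A\<lparr>one := e\<rparr>) (B\<lparr>one := e'\<rparr>)"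
  by (simp add: iso_def hom_def)

lemma hom_one_upd: "\<phi> \<in> hom A B \<Longrightarrow> \<phi> \<in> hom (A\<lparr>one := e\<rparr>) (B\<lparr>one := e'\<rparr>)"
  by (simp add: hom_def)

lemma group_one_unique:
  assumes "group G" "group (G\<lparr>one := e\<rparr>)"
  shows "e = \<one>\<^bsub>G\<^esub>"
proof -
  have e: "e \<in> carrier G" using monoid.one_closed[OF group.is_monoid[OF assms(2)]] by simp
  have "e \<otimes>\<^bsub>G\<^esub> \<one>\<^bsub>G\<^esub> = \<one>\<^bsub>G\<^esub>"
    using monoid.l_one[OF group.is_monoid[OF assms(2)], of "\<one>\<^bsub>G\<^esub>"] group.is_monoid[OF assms(1)]
    by (simp add: monoid.one_closed)
  moreover have "e \<otimes>\<^bsub>G\<^esub> \<one>\<^bsub>G\<^esub> = e" using monoid.r_one[OF group.is_monoid[OF assms(1)] e] .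
  ultimately show ?thesis by simp
qed

lemma img_group_iso:
  assumes "group A" "\<phi> \<in> iso A B"
  shows "group (B\<lparr>one := \<phi> \<one>\<^bsub>A\<^esub>\<rparr>)"
proof -
  have "group (B\<lparr>carrier := \<phi> ` carrier A, one := \<phi> \<one>\<^bsub>A\<^esub>\<rparr>)"
    using group.hom_imp_img_group[OF assms(1)] assms(2) unfolding iso_def by blast
  moreover have "\<phi> ` carrier A = carrier B" using assms(2) by (simp add: iso_def bij_betw_def)
  ultimately show ?thesis by simp
qed

lemma Inv_transfer:
  assumes "Inv B" "A \<cong> B"
  shows "Inv A"
  unfolding Inv_def
proof (intro conjI allI impI)
  show "finite (carrier A)" using assms iso_finite unfolding Inv_def by blast
  fix e assume gA: "group (A\<lparr>one := e\<rparr>)"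
  obtain \<phi> where phi: "\<phi> \<in> iso A B" using assms(2) by (auto simp: is_iso_def)
  have phi1: "\<phi> \<in> iso (A\<lparr>one := e\<rparr>) (B\<lparr>one := \<one>\<^bsub>B\<^esub>\<rparr>)" using iso_one_upd[OF phi] .
  then have phi1': "\<phi> \<in> iso (A\<lparr>one := e\<rparr>) B" by simp
  have gB: "group (B\<lparr>one := \<phi> e\<rparr>)" using img_group_iso[OF gA phi1'] by simp
  have phi2: "\<phi> \<in> iso (A\<lparr>one := e\<rparr>) (B\<lparr>one := \<phi> e\<rparr>)" using iso_one_upd[OF phi] .
  have sB: "solvable (B\<lparr>one := \<phi> e\<rparr>)" "Qp (B\<lparr>one := \<phi> e\<rparr>)" using assms(1) gB unfolding Inv_def by blast+
  have hom: "\<phi> \<in> hom (A\<lparr>one := e\<rparr>) (B\<lparr>one := \<phi> e\<rparr>)" and inj: "inj_on \<phi> (carrier (A\<lparr>one := e\<rparr>))"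
    using phi2 by (auto simp: iso_def bij_betw_def)
  have gh: "group_hom (A\<lparr>one := e\<rparr>) (B\<lparr>one := \<phi> e\<rparr>) \<phi>"
    using gA gB hom by (simp add: group_hom_def group_hom_axioms_def)
  show "solvable (A\<lparr>one := e\<rparr>)" using group_hom.inj_hom_imp_solvable[OF gh inj sB(1)] .
  show "Qp (A\<lparr>one := e\<rparr>)" using qp_pullback[OF gA gB hom inj sB(2)] .
qed

lemma Inv_final:
  assumes "Inv G" "group G"
  shows "solvable G \<and> Qp G \<and> finite (carrier G)"
proof -
  have eq: "G\<lparr>one := \<one>\<^bsub>G\<^esub>\<rparr> = G" by simp
  show ?thesis using assms unfolding Inv_def by (metis eq)
qed

lemma comm_solvable_Qp:
  assumes "comm_group G"
  shows "solvable G \<and> Qp G"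
proof
  interpret comm_group G by fact
  have "(derived G ^^ 1) (carrier G) = {\<one>\<^bsub>G\<^esub>}" using derived_eq_singleton by simp
  then show "solvable G" using solvable_iff_trivial_derived_seq by blast
  show "Qp G" unfolding Qp_def
    by (intro allI impI sub_comm) (auto simp: is_group intro: m_comm dest: subgroup.mem_carrier)
qed

lemma Inv_abelian:
  assumes "comm_group G" "finite (carrier G)"
  shows "Inv G"
  unfolding Inv_def
proof (intro conjI allI impI)
  fix e assume g: "group (G\<lparr>one := e\<rparr>)"
  have "e = \<one>\<^bsub>G\<^esub>" using group_one_unique[OF comm_group.axioms(2)[OF assms(1)] g] .
  then have "G\<lparr>one := e\<rparr> = G" by simp
  then show "solvable (G\<lparr>one := e\<rparr>)" "Qp (G\<lparr>one := e\<rparr>)" using comm_solvable_Qp[OF assms(1)] by auto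
qed (use assms in auto)

lemma ppow_img:
  assumes "group_hom G H h" "subgroup P G" "finite P" "Factorial_Ring.prime (p::nat)" "card P = p ^ k"
  shows "\<exists>j. card (h ` P) = p ^ j"
  using img_card_dvd[OF assms(1-3)] assms(4,5) divides_primepow_nat by metis

lemma prod_nice:
  assumes gA: "group A" and gB: "group B" and fA: "finite (carrier A)" and fB: "finite (carrier B)"
    and sA: "solvable A" and sB: "solvable B" and qA: "Qp A" and qB: "Qp B"
  shows "solvable (A \<times>\<times> B) \<and> Qp (A \<times>\<times> B)"
proof
  have gD: "group (A \<times>\<times> B)" using DirProd_group gA gB .
  have ghf: "group_hom A (A \<times>\<times> B) (\<lambda>a. (a, \<one>\<^bsub>B\<^esub>))"
    using gA gB gD by (auto simp: group_hom_def group_hom_axioms_def hom_def group.is_monoid monoid.one_closed)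
  have ghs: "group_hom (A \<times>\<times> B) B snd"
    using gA gB gD by (auto simp: group_hom_def group_hom_axioms_def hom_def mult_DirProd')
  have ghfst: "group_hom (A \<times>\<times> B) A fst"
    using gA gB gD by (auto simp: group_hom_def group_hom_axioms_def hom_def mult_DirProd')
  have "\<one>\<^bsub>A\<^esub> \<in> carrier A" using gA by (simp add: group.is_monoid monoid.one_closed)
  then have surj: "snd ` carrier (A \<times>\<times> B) = carrier B" by force
  have ker: "kernel (A \<times>\<times> B) B snd \<subseteq> (\<lambda>a. (a, \<one>\<^bsub>B\<^esub>)) ` carrier A"
    by (auto simp: kernel_def)
  show "solvable (A \<times>\<times> B)" using solvable_condition[OF ghf ghs surj ker sA sB] .
  show "Qp (A \<times>\<times> B)" unfolding Qp_def
  proof (intro allI impI)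
    fix P and p :: nat and k
    assume pr: "Factorial_Ring.prime p" and sP: "subgroup P (A \<times>\<times> B)" and cP: "card P = p ^ k"
    have fP: "finite P" using subgroup.subset[OF sP] fA fB finite_subset by fastforce
    obtain j1 where j1: "card (fst ` P) = p ^ j1" using ppow_img[OF ghfst sP fP pr cP] by blast
    obtain j2 where j2: "card (snd ` P) = p ^ j2" using ppow_img[OF ghs sP fP pr cP] by blast
    have c1: "comm_group (A\<lparr>carrier := fst ` P\<rparr>)"
      using qA pr group_hom.subgroup_img_is_subgroup[OF ghfst sP] j1 unfolding Qp_def by blast
    have c2: "comm_group (B\<lparr>carrier := snd ` P\<rparr>)"
      using qB pr group_hom.subgroup_img_is_subgroup[OF ghs sP] j2 unfolding Qp_def by blast
    show "comm_group ((A \<times>\<times> B)\<lparr>carrier := P\<rparr>)"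
    proof (rule sub_comm[OF gD sP])
      fix x y assume xy: "x \<in> P" "y \<in> P"
      have "fst x \<otimes>\<^bsub>A\<^esub> fst y = fst y \<otimes>\<^bsub>A\<^esub> fst x"
        using comm_groupE(4)[OF c1, of "fst x" "fst y"] xy by auto
      moreover have "snd x \<otimes>\<^bsub>B\<^esub> snd y = snd y \<otimes>\<^bsub>B\<^esub> snd x"
        using comm_groupE(4)[OF c2, of "snd x" "snd y"] xy by auto
      ultimately show "x \<otimes>\<^bsub>A \<times>\<times> B\<^esub> y = y \<otimes>\<^bsub>A \<times>\<times> B\<^esub> x" by (simp add: mult_DirProd')
    qed
  qed
qed

lemma group_fst_img:
  assumes g: "group ((G1 \<times>\<times> G2)\<lparr>one := e\<rparr>)"
  shows "group (G1\<lparr>one := fst e\<rparr>)" "group (G2\<lparr>one := snd e\<rparr>)"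
proof -
  have ec: "e \<in> carrier G1 \<times> carrier G2" using monoid.one_closed[OF group.is_monoid[OF g]] by simp
  have h1: "fst \<in> hom ((G1 \<times>\<times> G2)\<lparr>one := e\<rparr>) G1" by (auto simp: hom_def mult_DirProd')
  have h2: "snd \<in> hom ((G1 \<times>\<times> G2)\<lparr>one := e\<rparr>) G2" by (auto simp: hom_def mult_DirProd')
  have i1: "fst ` (carrier G1 \<times> carrier G2) = carrier G1" using ec by force
  have i2: "snd ` (carrier G1 \<times> carrier G2) = carrier G2" using ec by force
  show "group (G1\<lparr>one := fst e\<rparr>)" using group.hom_imp_img_group[OF g h1] i1 by simp
  show "group (G2\<lparr>one := snd e\<rparr>)" using group.hom_imp_img_group[OF g h2] i2 by simp
qed

lemma Inv_prod:
  assumes i1: "Inv G1" and i2: "Inv G2"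
  shows "Inv (G1 \<times>\<times> G2)"
  unfolding Inv_def
proof (intro conjI allI impI)
  show "finite (carrier (G1 \<times>\<times> G2))" using assms unfolding Inv_def by simp
  fix e assume g: "group ((G1 \<times>\<times> G2)\<lparr>one := e\<rparr>)"
  have eq: "(G1 \<times>\<times> G2)\<lparr>one := e\<rparr> = G1\<lparr>one := fst e\<rparr> \<times>\<times> G2\<lparr>one := snd e\<rparr>"
    by (simp add: DirProd_def)
  have g1: "group (G1\<lparr>one := fst e\<rparr>)" and g2: "group (G2\<lparr>one := snd e\<rparr>)" using group_fst_img[OF g] by auto
  have "solvable (G1\<lparr>one := fst e\<rparr> \<times>\<times> G2\<lparr>one := snd e\<rparr>) \<and> Qp (G1\<lparr>one := fst e\<rparr> \<times>\<times> G2\<lparr>one := snd e\<rparr>)"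
    apply (rule prod_nice[OF g1 g2])
    using i1 i2 g1 g2 unfolding Inv_def by auto
  then show "solvable ((G1 \<times>\<times> G2)\<lparr>one := e\<rparr>)" "Qp ((G1 \<times>\<times> G2)\<lparr>one := e\<rparr>)" using eq by auto
qed

lemma Inv_semidirect:
  assumes "Inv K" "comm_group H" "finite (carrier H)" "coprime (order H) (order K)"
    "mu \<in> hom K (AutoGroup H)"
  shows "Inv (semidirect_product H mu K)"
  unfolding Inv_def
proof (intro conjI allI impI)
  interpret H: comm_group H by fact
  show "finite (carrier (semidirect_product H mu K))"
    using assms(1,3) unfolding Inv_def by (simp add: semidirect_product_def)
  fix e
  let ?D = "(semidirect_product H mu K)\<lparr>one := e\<rparr>"
  let ?K = "K\<lparr>one := snd e\<rparr>"
  assume gD: "group ?D"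
  have cD: "carrier ?D = carrier H \<times> carrier K" by (simp add: semidirect_product_def)
  have mD: "\<And>x y. x \<otimes>\<^bsub>?D\<^esub> y = (fst x \<otimes>\<^bsub>H\<^esub> mu (snd x) (fst y), snd x \<otimes>\<^bsub>K\<^esub> snd y)"
    by (simp add: semidirect_product_def)
  have fK: "finite (carrier K)" using assms(1) unfolding Inv_def by simp
  have hs: "snd \<in> hom ?D K" by (auto simp: hom_def semidirect_product_def)
  have "snd ` carrier ?D = carrier K" unfolding cD using H.one_closed by force
  then have gK: "group ?K" using group.hom_imp_img_group[OF gD hs] by simp
  have sK: "solvable ?K" "Qp ?K" using assms(1) gK unfolding Inv_def by auto
  have hs': "snd \<in> hom ?D ?K" by (auto simp: hom_def semidirect_product_def)
  have ghs: "group_hom ?D ?K snd" using gD gK hs' by (simp add: group_hom_def group_hom_axioms_def)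
  have muK: "mu \<in> hom ?K (AutoGroup H)" using assms(5) by (simp add: hom_def)
  have gA: "group (AutoGroup H)" using H.AutoGroup .
  have mu1: "mu (snd e) = (\<lambda>x\<in>carrier H. x)"
    using hom_one[OF muK gK gA] by (simp add: AutoGroup_def BijGroup_def)
  have eK: "snd e \<in> carrier K" "snd e \<otimes>\<^bsub>K\<^esub> snd e = snd e"
    using monoid.one_closed[OF group.is_monoid[OF gK]] monoid.l_one[OF group.is_monoid[OF gK]] by auto
  have ghf: "group_hom H ?D (\<lambda>h. (h, snd e))"
    using gD eK mu1 by (auto simp: group_hom_def group_hom_axioms_def hom_def semidirect_product_def H.is_group)
  have surj: "snd ` carrier ?D = carrier ?K" unfolding cD using H.one_closed by force
  have ker: "kernel ?D ?K snd \<subseteq> (\<lambda>h. (h, snd e)) ` carrier H"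
    by (auto simp: kernel_def cD)
  show "solvable ?D"
    using solvable_condition[OF ghf ghs surj ker] comm_solvable_Qp[OF assms(2)] sK(1) by blast
  show "Qp ?D" unfolding Qp_def
  proof (intro allI impI)
    fix P and p :: nat and k
    assume pr: "Factorial_Ring.prime p" and sP: "subgroup P ?D" and cP: "card P = p ^ k"
    have Psub: "P \<subseteq> carrier H \<times> carrier K" using subgroup.subset[OF sP] cD by simp
    have fP: "finite P" using Psub assms(3) fK finite_subset by blast
    have sSP: "subgroup (snd ` P) ?K" using group_hom.subgroup_img_is_subgroup[OF ghs sP] .
    show "comm_group (?D\<lparr>carrier := P\<rparr>)"
    proof (cases "p dvd order H")
      case True
      have npK: "\<not> p dvd card (carrier K)"
      proof
        assume "p dvd card (carrier K)"
        then have "p dvd gcd (order H) (order K)" using True by (simp add: order_def)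
        then show False using assms(4) pr by (simp add: not_prime_1)
      qed
      obtain j where j: "card (snd ` P) = p ^ j" using ppow_img[OF ghs sP fP pr cP] by blast
      have "card (snd ` P) dvd card (carrier ?K)"
        using sub_card_dvd[OF gK sSP group.subgroup_self[OF gK]] subgroup.subset[OF sSP] fK by simp
      then have "p ^ j dvd card (carrier K)" using j by simp
      then have "j = 0" using npK pr
        by (metis dvd_power dvd_trans gr0I)
      then have c1: "card (snd ` P) = 1" using j by simp
      have "snd e \<in> snd ` P" using subgroup.one_closed[OF sSP] by simp
      then have sP1: "snd ` P = {snd e}" using c1 by (metis card_1_singletonE singletonD)
      show ?thesis
      proof (rule sub_comm[OF gD sP])
        fix x y assume xy: "x \<in> P" "y \<in> P"
        have sx: "snd x = snd e" "snd y = snd e" using sP1 xy by auto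
        have fx: "fst x \<in> carrier H" "fst y \<in> carrier H" using xy Psub by auto
        show "x \<otimes>\<^bsub>?D\<^esub> y = y \<otimes>\<^bsub>?D\<^esub> x"
          using sx fx mu1 by (simp add: semidirect_product_def H.m_comm)
      qed
    next
      case False
      have gP: "group (?D\<lparr>carrier := P\<rparr>)" using group.subgroup_imp_group[OF gD sP] .
      have ghP: "group_hom (?D\<lparr>carrier := P\<rparr>) ?K snd"
        using gP gK hs' Psub by (auto simp: group_hom_def group_hom_axioms_def hom_def semidirect_product_def)
      define N where "N = kernel (?D\<lparr>carrier := P\<rparr>) ?K snd"
      have NP: "N = P \<inter> kernel ?D ?K snd" using Psub by (auto simp: N_def kernel_def cD)
      have sN: "subgroup N ?D"
        unfolding NP using group.subgroups_Inter_pair[OF gD sP group_hom.subgroup_kernel[OF ghs]] .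
      have fin: "finite (carrier ?D)" using cD assms(3) fK by simp
      have "card N dvd card P" using sub_card_dvd[OF gD sN sP] NP fP by auto
      then obtain i where i: "card N = p ^ i" using cP pr divides_primepow_nat by metis
      have kerEq: "kernel ?D ?K snd = (\<lambda>h. (h, snd e)) ` carrier H"
        using ker eK by (auto simp: kernel_def cD)
      have "card (kernel ?D ?K snd) = order H"
        unfolding kerEq order_def by (rule card_image) (auto simp: inj_on_def)
      moreover have "card N dvd card (kernel ?D ?K snd)"
        using sub_card_dvd[OF gD sN group_hom.subgroup_kernel[OF ghs]] NP fin
          finite_subset[of "kernel ?D ?K snd" "carrier ?D"] by (auto simp: kernel_def)
      ultimately have "p ^ i dvd order H" using i by simp
      then have "i = 0" using False pr by (metis dvd_power dvd_trans gr0I)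
      then have "card N = 1" using i by simp
      moreover have "\<one>\<^bsub>?D\<lparr>carrier := P\<rparr>\<^esub> \<in> N"
        unfolding N_def using group_hom.subgroup_kernel[OF ghP] subgroup.one_closed by blast
      ultimately have "N = {\<one>\<^bsub>?D\<lparr>carrier := P\<rparr>\<^esub>}" by (metis card_1_singletonE singletonD)
      then have inj: "inj_on snd P"
        using group_hom.trivial_ker_imp_inj[OF ghP] unfolding N_def by simp
      have "card (snd ` P) = p ^ k" using card_image[OF inj] cP by simp
      then have "comm_group (?K\<lparr>carrier := snd ` P\<rparr>)" using sK(2) pr sSP unfolding Qp_def by blast
      then show ?thesis using pullback_comm[OF gD gK hs' sP inj] by simp
    qed
  qed
qed

lemma Aprime_Inv: "Aprime_nat S \<Longrightarrow> Inv S"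
proof (induction rule: Aprime_nat.induct)
  case (abelian G) then show ?case by (rule Inv_abelian)
next
  case (semidirect K H mu S)
  then show ?case using Inv_transfer Inv_semidirect by blast
next
  case (product G1 G2 S)
  then show ?case using Inv_transfer Inv_prod by blast
qed

theorem mainTheorem4:
  fixes G :: "('a, 'b) monoid_scheme"
  assumes "Aprime_group G"
  shows "solvable G \<and> A_group G"
proof -
  obtain S where g: "group G" and S: "Aprime_nat S" "G \<cong> S"
    using assms unfolding Aprime_group_def by blast
  have "Inv G" using Inv_transfer[OF Aprime_Inv[OF S(1)] S(2)] .
  then have r: "solvable G" "Qp G" "finite (carrier G)" using Inv_final g by blast+
  have "A_group G" unfolding A_group_def
    using r g unfolding sylow_subgroup_def Qp_def by blast
  then show ?thesis using r by blast
qed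

end
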